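(* Let $b_1 < b_2$ be real numbers and $h>0$, and let $\mathcal{B}\subset\mathbb{C}$ be the closed rectangle with vertices $b_1, b_2, \beta_1 = b_1 - \mathrm{i}h, \beta_2 = b_2 - \mathrm{i}h$ (so $\operatorname{Im}(b_j)=0$ and $\operatorname{Im}(\beta_j)=-h<0$). Fix $z\in\mathbb{C}$ and, for $p\in\mathbb{C}$, let $R_p(\lambda) = 1-(\lambda-z)p$. Then: (i) for every $p\in\mathbb{C}$, $\max_{\lambda\in\mathcal{B}}|R_p(\lambda)| = \max_{\lambda\in\{b_1,b_2,\beta_1,\beta_2\}}|R_p(\lambda)|$; consequently \[ \min_{p\in\mathbb{C}}\max_{\lambda\in\mathcal{B}}|R_p(\lambda)|=\min_{p\in\mathbb{C}}\max_{\lambda\in\{b_1, b_2, \beta_1, \beta_2\}}|R_p(\lambda)|. \] (ii) If moreover $\operatorname{Im}(z)\notin[-h, 0]$ and $z$ lies in the interior of the circumcircle of $\mathcal{B}$, define \[ (\alpha_1, \alpha_2) = \begin{cases} (b_1-z,\ b_2-z) & \text{if } \operatorname{Im}(z)>0,\\ (\beta_1-z,\ \beta_2-z) & \text{otherwise}.\end{cases} \] Then \[ \min_{p\in\mathbb{C}}\max_{\lambda\in\mathcal{B}}|R_p(\lambda)| = \frac{|\alpha_1 - \alpha_2|}{|\alpha_1|+|\alpha_2|}, \] and this minimum is attained at $p^\ast=\dfrac{|\alpha_1|/\alpha_1 + |\alpha_2|/\alpha_2}{|\alpha_1|+|\alpha_2|}$.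
   Context: This concerns the stationary Richardson iteration $y^{(m+1)} = y^{(m)} + p\,(f-(A-zI)y^{(m)})$ for a shifted system $(A-zI)y=f$ whose spectrum lies in $\mathcal{B}$; $R_p$ is its residual polynomial. *)

theory Defs
  imports "HOL-Analysis.Analysis"
begin

definition resid_poly :: "complex \<Rightarrow> complex \<Rightarrow> complex \<Rightarrow> complex" where
  "resid_poly z p l = 1 - (l - z) * p"

definition rect :: "real \<Rightarrow> real \<Rightarrow> real \<Rightarrow> complex set" where
  "rect b1 b2 h = {l. b1 \<le> Re l \<and> Re l \<le> b2 \<and> - h \<le> Im l \<and> Im l \<le> 0}"

definition corners :: "real \<Rightarrow> real \<Rightarrow> real \<Rightarrow> complex set" where
  "corners b1 b2 h = {complex_of_real b1, complex_of_real b2,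
                      complex_of_real b1 - \<i> * complex_of_real h,
                      complex_of_real b2 - \<i> * complex_of_real h}"

text \<open>Maximum of |R_p| over a set (supremum; for compact sets it is attained).\<close>
definition max_resid :: "complex \<Rightarrow> complex set \<Rightarrow> complex \<Rightarrow> real" where
  "max_resid z S p = (SUP l\<in>S. cmod (resid_poly z p l))"

definition circum_interior :: "real \<Rightarrow> real \<Rightarrow> real \<Rightarrow> complex set" where
  "circum_interior b1 b2 h =
     ball (Complex ((b1 + b2) / 2) (- h / 2)) (sqrt ((b2 - b1)^2 + h^2) / 2)"

end

theory Submission
  imports Defs
begin


lemma seg:
  fixes u :: real and x y z p :: complex
  assumes "0 \<le> u" "u \<le> 1"
  shows "cmod (resid_poly z p ((1 - of_real u) * x + of_real u * y))
           \<le> max (cmod (resid_poly z p x)) (cmod (resid_poly z p y))"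
proof -
  have eq: "resid_poly z p ((1 - of_real u) * x + of_real u * y)
        = of_real (1-u) * resid_poly z p x + of_real u * resid_poly z p y"
    by (simp add: resid_poly_def algebra_simps)
  have "cmod (of_real (1-u) * resid_poly z p x + of_real u * resid_poly z p y)
       \<le> (1-u) * cmod (resid_poly z p x) + u * cmod (resid_poly z p y)"
    using assms by (metis (no_types, opaque_lifting) abs_of_nonneg diff_ge_0_iff_ge norm_mult norm_of_real norm_triangle_ineq)
  also have "\<dots> \<le> (1-u) * max (cmod (resid_poly z p x)) (cmod (resid_poly z p y)) + u * max (cmod (resid_poly z p x)) (cmod (resid_poly z p y))"
    using assms by (intro add_mono mult_left_mono) auto
  also have "\<dots> = max (cmod (resid_poly z p x)) (cmod (resid_poly z p y))" by (simp add: algebra_simps)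
  finally show ?thesis unfolding eq .
qed

lemma rect_bound:
  assumes "b1 < b2" "h > 0" "l \<in> rect b1 b2 h"
  shows "cmod (resid_poly z p l) \<le> Max ((\<lambda>l. cmod (resid_poly z p l)) ` corners b1 b2 h)"
proof -
  let ?g = "\<lambda>l. cmod (resid_poly z p l)"
  let ?M = "Max (?g ` corners b1 b2 h)"
  have fin: "finite (?g ` corners b1 b2 h)" by (simp add: corners_def)
  have cM: "?g c \<le> ?M" if "c \<in> corners b1 b2 h" for c
    using fin that by (intro Max_ge) auto
  define s where "s = (Re l - b1) / (b2 - b1)"
  define u where "u = - Im l / h"
  have s01: "0 \<le> s" "s \<le> 1" using assms by (auto simp: s_def rect_def field_simps)
  have u01: "0 \<le> u" "u \<le> 1" using assms by (auto simp: u_def rect_def field_simps)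
  define top where "top = (complex_of_real (Re l))"
  define bot where "bot = (complex_of_real (Re l)) - \<i> * complex_of_real h"
  have l_eq: "l = (1 - of_real u) * top + of_real u * bot"
    using assms by (simp add: complex_eq_iff u_def top_def bot_def field_simps)
  have sR: "b1 + s*(b2-b1) = Re l" using assms by (simp add: s_def)
  have top_eq: "top = (1 - of_real s) * complex_of_real b1 + of_real s * complex_of_real b2"
    using sR by (simp add: complex_eq_iff top_def algebra_simps)
  have bot_eq: "bot = (1 - of_real s) * (complex_of_real b1 - \<i> * complex_of_real h) + of_real s * (complex_of_real b2 - \<i> * complex_of_real h)"
    using sR by (simp add: complex_eq_iff bot_def algebra_simps)
  have c1: "?g (complex_of_real b1) \<le> ?M" "?g (complex_of_real b2) \<le> ?M"
     "?g (complex_of_real b1 - \<i> * complex_of_real h) \<le> ?M"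
     "?g (complex_of_real b2 - \<i> * complex_of_real h) \<le> ?M"
    by (rule cM, simp add: corners_def)+
  have "?g top \<le> ?M" unfolding top_eq
    by (rule order_trans[OF seg[OF s01, of z p]]) (use c1 in simp)
  moreover have "?g bot \<le> ?M" unfolding bot_eq
    by (rule order_trans[OF seg[OF s01, of z p]]) (use c1 in simp)
  moreover have "?g l \<le> max (?g top) (?g bot)"
    by (subst l_eq) (rule seg[OF u01])
  ultimately show ?thesis by (meson max.boundedI order_trans)
qed

lemma corners_sub: "b1 < b2 \<Longrightarrow> h > 0 \<Longrightarrow> corners b1 b2 h \<subseteq> rect b1 b2 h"
  by (auto simp: corners_def rect_def)

lemma part1:
  assumes "b1 < b2" "h > 0"
  shows "max_resid z (rect b1 b2 h) p = Max ((\<lambda>l. cmod (resid_poly z p l)) ` corners b1 b2 h)"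
  unfolding max_resid_def
proof (rule cSup_eq_maximum)
  let ?g = "\<lambda>l. cmod (resid_poly z p l)"
  have fin: "finite (?g ` corners b1 b2 h)" "?g ` corners b1 b2 h \<noteq> {}" by (auto simp: corners_def)
  show "Max (?g ` corners b1 b2 h) \<in> ?g ` rect b1 b2 h"
    using Max_in[OF fin] corners_sub[OF assms] by blast
  show "\<And>x. x\<in>?g ` rect b1 b2 h \<Longrightarrow> x \<le> Max (?g ` corners b1 b2 h)"
    using rect_bound[OF assms] by blast
qed

lemma corners_max: "max_resid z (corners b1 b2 h) p = Max ((\<lambda>l. cmod (resid_poly z p l)) ` corners b1 b2 h)"
  unfolding max_resid_def by (rule cSup_eq_Max) (auto simp: corners_def)



lemma lower:
  fixes a1 a2 p :: complex
  assumes "cmod a1 + cmod a2 > 0"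
  shows "cmod (a1 - a2) / (cmod a1 + cmod a2) \<le> max (cmod (1 - a1*p)) (cmod (1 - a2*p))"
proof -
  let ?m = "max (cmod (1 - a1*p)) (cmod (1 - a2*p))"
  have "a2 - a1 = a2 * (1 - a1*p) - a1 * (1 - a2*p)" by (simp add: algebra_simps)
  hence "cmod (a1 - a2) \<le> cmod a2 * cmod (1 - a1*p) + cmod a1 * cmod (1 - a2*p)"
    by (metis norm_minus_commute norm_mult norm_triangle_ineq4)
  also have "\<dots> \<le> cmod a2 * ?m + cmod a1 * ?m"
    by (intro add_mono mult_left_mono) auto
  finally show ?thesis using assms by (simp add: divide_le_eq algebra_simps)
qed

lemma key_real:
  fixes a1 a2 t h T q D :: real
  assumes "h > 0" "t > 0" "T \<ge> 0" "T^2 = q^2 + t^2 * D" "q > h*t" "D \<ge> 0"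
  shows "h * (T - q) \<le> t * D"
proof -
  have Tq: "T + q > 0" using assms by (smt (verit) mult_pos_pos)
  have "(T + q) * (h * (T - q)) = h * (T^2 - q^2)" by (simp add: algebra_simps power2_eq_square)
  also have "\<dots> = h * t^2 * D" using assms(4) by simp
  also have "\<dots> \<le> (T + q) * (t * D)"
  proof -
    have "h*t \<le> T + q" using assms by linarith
    hence "(h*t) * (t*D) \<le> (T+q) * (t*D)" using assms by (intro mult_right_mono) auto
    thus ?thesis by (simp add: power2_eq_square algebra_simps)
  qed
  finally show ?thesis using Tq by (simp add: mult_le_cancel_left_pos)
qed



lemma f_formula:
  fixes a s P Q :: real
  shows "(cmod (1 - Complex a s * Complex P Q))^2 = (1 - a*P + s*Q)^2 + (a*Q + s*P)^2"
  unfolding cmod_power2 by (simp add: power2_eq_square algebra_simps)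

lemma part2_pos:
  fixes a1 a2 t h :: real
  assumes h: "h > 0" and a12: "a1 < a2" and t: "t > 0" and circ: "a1*a2 + t^2 + h*t < 0"
  defines "\<alpha>1 \<equiv> Complex a1 t" and "\<alpha>2 \<equiv> Complex a2 t"
  defines "p \<equiv> (of_real (cmod \<alpha>1) / \<alpha>1 + of_real (cmod \<alpha>2) / \<alpha>2) / of_real (cmod \<alpha>1 + cmod \<alpha>2)"
  defines "v \<equiv> cmod (\<alpha>1 - \<alpha>2) / (cmod \<alpha>1 + cmod \<alpha>2)"
  shows "cmod (1 - \<alpha>1 * p) = v" "cmod (1 - \<alpha>2 * p) = v"
        "cmod (1 - Complex a1 (t+h) * p) \<le> v" "cmod (1 - Complex a2 (t+h) * p) \<le> v"
proof -
  define r1 where "r1 = cmod \<alpha>1"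
  define r2 where "r2 = cmod \<alpha>2"
  define S where "S = r1 + r2"
  have nz1: "\<alpha>1 \<noteq> 0" and nz2: "\<alpha>2 \<noteq> 0" using t by (auto simp: \<alpha>1_def \<alpha>2_def complex_eq_iff)
  have r1p: "r1 > 0" and r2p: "r2 > 0" using nz1 nz2 by (auto simp: r1_def r2_def)
  have Sp: "S > 0" using r1p r2p by (simp add: S_def)
  have r1sq: "r1^2 = a1^2 + t^2" by (simp add: r1_def \<alpha>1_def cmod_power2)
  have r2sq: "r2^2 = a2^2 + t^2" by (simp add: r2_def \<alpha>2_def cmod_power2)
  have pdef: "p = (of_real r1 / \<alpha>1 + of_real r2 / \<alpha>2) / of_real S"
    by (simp add: p_def r1_def r2_def S_def)
  have vdef: "v = cmod (\<alpha>1 - \<alpha>2) / S" by (simp add: v_def r1_def r2_def S_def)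
  have hS: "(of_real S :: complex) \<noteq> 0" using Sp by simp
  have e1: "1 - \<alpha>1 * p = of_real r2 * (\<alpha>2 - \<alpha>1) / (\<alpha>2 * of_real S)"
    using nz1 nz2 Sp hS unfolding pdef
    apply (simp add: field_simps)
    apply (simp add: S_def algebra_simps)
    done
  have e2: "1 - \<alpha>2 * p = of_real r1 * (\<alpha>1 - \<alpha>2) / (\<alpha>1 * of_real S)"
    using nz1 nz2 Sp hS unfolding pdef
    apply (simp add: field_simps)
    apply (simp add: S_def algebra_simps)
    done
  show n1: "cmod (1 - \<alpha>1 * p) = v" unfolding e1 vdef using r1p r2p Sp
    by (simp add: norm_mult norm_divide r2_def norm_minus_commute)
  show n2: "cmod (1 - \<alpha>2 * p) = v" unfolding e2 vdef using r1p r2p Sp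
    by (simp add: norm_mult norm_divide r1_def)
  define T where "T = r1 * r2"
  define P where "P = (a1/r1 + a2/r2) / S"
  define Q where "Q = (-t/r1 - t/r2) / S"
  have i1: "of_real r1 / \<alpha>1 = Complex (a1/r1) (-t/r1)"
  proof -
    have "Complex (a1/r1) (-t/r1) * \<alpha>1 = of_real r1"
      using r1p r1sq by (simp add: \<alpha>1_def complex_eq_iff field_simps power2_eq_square)
    thus ?thesis using nz1 by (simp add: divide_eq_eq)
  qed
  have i2: "of_real r2 / \<alpha>2 = Complex (a2/r2) (-t/r2)"
  proof -
    have "Complex (a2/r2) (-t/r2) * \<alpha>2 = of_real r2"
      using r2p r2sq by (simp add: \<alpha>2_def complex_eq_iff field_simps power2_eq_square)
    thus ?thesis using nz2 by (simp add: divide_eq_eq)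
  qed
  have pPQ: "p = Complex P Q"
    unfolding pdef i1 i2 P_def Q_def using Sp by (simp add: complex_eq_iff Re_divide Im_divide power2_eq_square)
  have Qe: "Q = - t / T"
  proof -
    have "-t/r1 - t/r2 = -t*S/(r1*r2)" using r1p r2p by (simp add: S_def field_simps)
    thus ?thesis using Sp by (simp add: Q_def T_def)
  qed
  define c where "c = a1*a2 + t^2"
  have Tp: "T > 0" using r1p r2p by (simp add: T_def)
  have PQ2: "P^2 + Q^2 = 2*(T + c) / (T * S^2)"
  proof -
    have Pe: "P = (a1*r2 + a2*r1) / (T*S)" using r1p r2p Sp by (simp add: P_def T_def field_simps)
    have "P^2 + Q^2 = ((a1*r2 + a2*r1)^2 + t^2 * S^2) / (T^2 * S^2)"
      unfolding Pe Qe using Tp Sp by (simp add: field_simps power2_eq_square)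
    also have "(a1*r2 + a2*r1)^2 + t^2 * S^2
        = 2*T*(T+c) + r2^2*(a1^2+t^2-r1^2) + r1^2*(a2^2+t^2-r2^2)"
      by (simp add: S_def T_def c_def algebra_simps power2_eq_square)
    also have "\<dots> = 2*T*(T+c)" using r1sq r2sq by simp
    also have "2*T*(T+c) / (T^2*S^2) = 2*(T+c)/(T*S^2)" using Tp by (simp add: power2_eq_square)
    finally show ?thesis .
  qed
  have Ssq: "S^2 = a1^2 + a2^2 + 2*t^2 + 2*T"
    using r1sq r2sq by (simp add: S_def T_def power2_eq_square algebra_simps)
  have Tsq: "T^2 = (-c)^2 + t^2 * (a2-a1)^2"
  proof -
    have "T^2 = r1^2 * r2^2" by (simp add: T_def power_mult_distrib)
    also have "\<dots> = (a1^2+t^2)*(a2^2+t^2)" using r1sq r2sq by simp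
    finally show ?thesis by (simp add: c_def algebra_simps power2_eq_square)
  qed
  have kr: "h * (T - (-c)) \<le> t * (a2-a1)^2"
    by (rule key_real[OF h t]) (use Tp Tsq circ in \<open>auto simp: c_def\<close>)
  have main: "(2*t+h)*(T+c) \<le> t*S^2"
    using kr unfolding Ssq by (simp add: c_def algebra_simps power2_eq_square)
  have neg: "2*Q + (2*t+h)*(P^2+Q^2) \<le> 0"
  proof -
    have "2*Q + (2*t+h)*(P^2+Q^2) = 2*((2*t+h)*(T+c) - t*S^2) / (T*S^2)"
      unfolding PQ2 unfolding Qe using Tp Sp by (simp add: field_simps)
    also have "\<dots> \<le> 0" using main Tp Sp by (intro divide_nonpos_pos) auto
    finally show ?thesis .
  qed
  have far: "cmod (1 - Complex a (t+h) * p) \<le> v" if "cmod (1 - Complex a t * p) = v" for a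
  proof -
    have "(cmod (1 - Complex a (t+h) * p))^2 - (cmod (1 - Complex a t * p))^2
          = h * (2*Q + (2*t+h)*(P^2+Q^2))"
      unfolding pPQ f_formula by (simp add: algebra_simps power2_eq_square)
    also have "\<dots> \<le> 0" using h neg by (simp add: mult_nonneg_nonpos)
    finally have "(cmod (1 - Complex a (t+h) * p))^2 \<le> v^2" using that by simp
    moreover have "v \<ge> 0" using Sp by (simp add: vdef)
    ultimately show ?thesis by (rule power2_le_imp_le)
  qed
  show "cmod (1 - Complex a1 (t+h) * p) \<le> v" using far n1 by (simp add: \<alpha>1_def)
  show "cmod (1 - Complex a2 (t+h) * p) \<le> v" using far n2 by (simp add: \<alpha>2_def)
qed



lemma part2_gen:
  fixes a1 a2 t h :: real
  assumes h: "h > 0" and a12: "a1 < a2" and t: "t \<noteq> 0" and circ: "a1*a2 + t^2 + h*\<bar>t\<bar> < 0"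
  defines "\<alpha>1 \<equiv> Complex a1 t" and "\<alpha>2 \<equiv> Complex a2 t"
  defines "p \<equiv> (of_real (cmod \<alpha>1) / \<alpha>1 + of_real (cmod \<alpha>2) / \<alpha>2) / of_real (cmod \<alpha>1 + cmod \<alpha>2)"
  defines "v \<equiv> cmod (\<alpha>1 - \<alpha>2) / (cmod \<alpha>1 + cmod \<alpha>2)"
  defines "e \<equiv> (if t > 0 then h else -h)"
  shows "cmod (1 - \<alpha>1 * p) = v \<and> cmod (1 - \<alpha>2 * p) = v \<and>
        cmod (1 - Complex a1 (t+e) * p) \<le> v \<and> cmod (1 - Complex a2 (t+e) * p) \<le> v"
proof (cases "t > 0")
  case True
  thus ?thesis using part2_pos[OF h a12 True] circ unfolding \<alpha>1_def \<alpha>2_def p_def v_def e_def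
    by auto
next
  case False
  hence tn: "-t > 0" using t by auto
  have circ': "a1*a2 + (-t)^2 + h*(-t) < 0" using circ False by auto
  note R = part2_pos[OF h a12 tn circ']
  have c1: "Complex a1 (-t) = cnj \<alpha>1" and c2: "Complex a2 (-t) = cnj \<alpha>2"
    by (simp_all add: \<alpha>1_def \<alpha>2_def complex_eq_iff)
  have c3: "Complex a1 (-t+h) = cnj (Complex a1 (t+e))" and c4: "Complex a2 (-t+h) = cnj (Complex a2 (t+e))"
    using False by (simp_all add: e_def complex_eq_iff)
  define p' where "p' = (of_real (cmod (cnj \<alpha>1)) / cnj \<alpha>1 + of_real (cmod (cnj \<alpha>2)) / cnj \<alpha>2) / of_real (cmod (cnj \<alpha>1) + cmod (cnj \<alpha>2))"
  have pp: "p' = cnj p" by (simp add: p'_def p_def)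
  have cm: "\<And>x y. cmod (1 - cnj x * cnj y) = cmod (1 - x * y)"
    by (metis complex_cnj_mult complex_cnj_one complex_cnj_diff complex_mod_cnj)
  have v': "cmod (cnj \<alpha>1 - cnj \<alpha>2) / (cmod (cnj \<alpha>1) + cmod (cnj \<alpha>2)) = v"
    by (metis complex_cnj_diff complex_mod_cnj v_def)
  show ?thesis using R unfolding c1 c2 c3 c4 p'_def[symmetric] pp cm v' by simp
qed



lemma final:
  fixes \<alpha>1 \<alpha>2 \<gamma>1 \<gamma>2 z p :: complex and v :: real
  assumes bh: "b1 < b2" "h > 0"
    and C: "corners b1 b2 h = {z+\<alpha>1, z+\<alpha>2, z+\<gamma>1, z+\<gamma>2}"
    and f: "cmod (1 - \<alpha>1 * p) = v \<and> cmod (1 - \<alpha>2 * p) = v \<and> cmod (1 - \<gamma>1 * p) \<le> v \<and> cmod (1 - \<gamma>2 * p) \<le> v"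
    and vd: "v = cmod (\<alpha>1 - \<alpha>2) / (cmod \<alpha>1 + cmod \<alpha>2)"
    and pos: "cmod \<alpha>1 + cmod \<alpha>2 > 0"
  shows "(\<forall>q. max_resid z (rect b1 b2 h) p \<le> max_resid z (rect b1 b2 h) q) \<and> max_resid z (rect b1 b2 h) p = v"
proof -
  have M: "max_resid z (rect b1 b2 h) q = max (cmod (1 - \<alpha>1*q)) (max (cmod (1 - \<alpha>2*q)) (max (cmod (1 - \<gamma>1*q)) (cmod (1 - \<gamma>2*q))))" for q
    unfolding part1[OF bh] C by (simp add: resid_poly_def)
  have Mp: "max_resid z (rect b1 b2 h) p = v" unfolding M using f by (simp add: max_def)
  have "v \<le> max_resid z (rect b1 b2 h) q" for q
  proof -
    have "v \<le> max (cmod (1 - \<alpha>1*q)) (cmod (1 - \<alpha>2*q))" unfolding vd by (rule lower[OF pos])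
    thus ?thesis unfolding M by linarith
  qed
  with Mp show ?thesis by simp
qed

theorem theorem4p1:
  fixes b1 b2 h :: real and z :: complex
  assumes "b1 < b2" and "h > 0"
  shows "(\<forall>p. max_resid z (rect b1 b2 h) p = Max ((\<lambda>l. cmod (resid_poly z p l)) ` corners b1 b2 h))
       \<and> (INF p. max_resid z (rect b1 b2 h) p) = (INF p. max_resid z (corners b1 b2 h) p)
       \<and> (Im z \<notin> {- h..0} \<and> z \<in> circum_interior b1 b2 h \<longrightarrow>
           (let a1 = (if Im z > 0 then complex_of_real b1 - z else complex_of_real b1 - \<i> * complex_of_real h - z);
                a2 = (if Im z > 0 then complex_of_real b2 - z else complex_of_real b2 - \<i> * complex_of_real h - z);
                pstar = (of_real (cmod a1) / a1 + of_real (cmod a2) / a2) / of_real (cmod a1 + cmod a2)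
            in (\<forall>p. max_resid z (rect b1 b2 h) pstar \<le> max_resid z (rect b1 b2 h) p)
               \<and> max_resid z (rect b1 b2 h) pstar = cmod (a1 - a2) / (cmod a1 + cmod a2)))"
proof (intro conjI impI)
  note bh = assms
  show P1: "\<forall>p. max_resid z (rect b1 b2 h) p = Max ((\<lambda>l. cmod (resid_poly z p l)) ` corners b1 b2 h)"
    using part1[OF bh] by blast
  show "(INF p. max_resid z (rect b1 b2 h) p) = (INF p. max_resid z (corners b1 b2 h) p)"
    using part1[OF bh] corners_max by simp
  assume H: "Im z \<notin> {- h..0} \<and> z \<in> circum_interior b1 b2 h"
  define x where "x = Re z"
  define y where "y = Im z"
  have circ0: "((b1+b2)/2 - x)^2 + (-h/2 - y)^2 < ((b2-b1)^2 + h^2)/4"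
  proof -
    have "dist (Complex ((b1 + b2) / 2) (- h / 2)) z < sqrt ((b2 - b1)^2 + h^2) / 2"
      using H by (simp add: circum_interior_def)
    hence "sqrt (((b1+b2)/2 - x)^2 + (-h/2 - y)^2) < sqrt (((b2 - b1)^2 + h^2)/4)"
      by (simp add: dist_complex_def cmod_def x_def y_def real_sqrt_divide)
    thus ?thesis by simp
  qed
  have yc: "y > 0 \<or> y < -h" using H by (auto simp: y_def)
  show "let a1 = (if Im z > 0 then complex_of_real b1 - z else complex_of_real b1 - \<i> * complex_of_real h - z);
                a2 = (if Im z > 0 then complex_of_real b2 - z else complex_of_real b2 - \<i> * complex_of_real h - z);
                pstar = (of_real (cmod a1) / a1 + of_real (cmod a2) / a2) / of_real (cmod a1 + cmod a2)
            in (\<forall>p. max_resid z (rect b1 b2 h) pstar \<le> max_resid z (rect b1 b2 h) p)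
               \<and> max_resid z (rect b1 b2 h) pstar = cmod (a1 - a2) / (cmod a1 + cmod a2)"
  proof -
    define t where "t = (if y > 0 then -y else -h - y)"
    define e where "e = (if t > 0 then h else -h)"
    define a1r where "a1r = b1 - x"
    define a2r where "a2r = b2 - x"
    have tnz: "t \<noteq> 0" using yc bh by (auto simp: t_def)
    have a12: "a1r < a2r" using bh by (simp add: a1r_def a2r_def)
    have circ: "a1r*a2r + t^2 + h*\<bar>t\<bar> < 0"
    proof (cases "y > 0")
      case True
      then show ?thesis using circ0 by (simp add: t_def a1r_def a2r_def power2_eq_square field_simps)
    next
      case False
      then have "y < -h" using yc by auto
      then show ?thesis using circ0 False by (simp add: t_def a1r_def a2r_def power2_eq_square field_simps)
    qed
    have e1: "(if Im z > 0 then complex_of_real b1 - z else complex_of_real b1 - \<i> * complex_of_real h - z) = Complex a1r t"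
      by (simp add: complex_eq_iff t_def a1r_def x_def y_def)
    have e2: "(if Im z > 0 then complex_of_real b2 - z else complex_of_real b2 - \<i> * complex_of_real h - z) = Complex a2r t"
      by (simp add: complex_eq_iff t_def a2r_def x_def y_def)
    have C: "corners b1 b2 h = {z + Complex a1r t, z + Complex a2r t, z + Complex a1r (t+e), z + Complex a2r (t+e)}"
    proof (cases "y > 0")
      case True
      have "z + Complex a1r t = of_real b1" "z + Complex a2r t = of_real b2"
           "z + Complex a1r (t+e) = of_real b1 - \<i> * of_real h" "z + Complex a2r (t+e) = of_real b2 - \<i> * of_real h"
        using True by (simp_all add: complex_eq_iff t_def e_def a1r_def a2r_def x_def y_def)
      thus ?thesis by (simp add: corners_def)
    next
      case False
      then have "y < -h" using yc by auto
      then have "z + Complex a1r t = of_real b1 - \<i> * of_real h" "z + Complex a2r t = of_real b2 - \<i> * of_real h"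
           "z + Complex a1r (t+e) = of_real b1" "z + Complex a2r (t+e) = of_real b2"
        using False bh by (simp_all add: complex_eq_iff t_def e_def a1r_def a2r_def x_def y_def)
      thus ?thesis by (auto simp: corners_def)
    qed
    have pos: "cmod (Complex a1r t) + cmod (Complex a2r t) > 0"
      using tnz by (simp add: add_pos_nonneg complex_eq_iff)
    show ?thesis unfolding Let_def e1 e2
      by (rule final[OF bh C part2_gen[OF bh(2) a12 tnz circ, folded e_def] refl pos])
  qed
qed


end
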